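(* Let $S$ be a semiregular pseudocompact semitopological semigroup which is an orthogonal sum $S=\sum_{i\in\mathscr I}B^0_{\lambda_i}(S_i)$ of topological Brandt $\lambda_i^0$-extensions of semitopological monoids $S_i$ with zeros. Then for every open neighbourhood $U(0)$ of the zero $0$ of $S$ the set of triples $(i,\alpha_i,\beta_i)$ with $i\in\mathscr I$, $\alpha_i,\beta_i\in\lambda_i$ and $(S_i)_{\alpha_i,\beta_i}\not\subseteq U(0)$ is finite.
   Context: All spaces are Hausdorff; a semitopological semigroup is a Hausdorff space with separately continuous associative operation. A space is semiregular if it has a base of regular open sets ($A$ is regular open if $\operatorname{int}\operatorname{cl}A=A$); pseudocompact means every locally finite family of non-empty open sets is finite. For a semigroup $T$ with zero $0_T$ and a cardinal $\lambda\ge1$, $B^0_\lambda(T)=(\lambda\times (T\setminus\{0_T\})\times\lambda)\cup\{0\}$ with $(\alpha,a,\beta)(\gamma,b,\delta)=(\alpha,ab,\delta)$ if $\beta=\gamma$ and $ab\ne0_T$, and $0$ otherwise, $0$ a zero. For $A\subseteq T$, $A_{\alpha,\beta}=\{(\alpha,s,\beta):s\in A\setminus\{0_T\}\}\cup\{0\}$ if $0_T\in A$ and $\{(\alpha,s,\beta):s\in A\}$ otherwise. A topological Brandt $\lambda^0$-extension of a semitopological monoid $T$ with zero is $B^0_\lambda(T)$ with a topology making it a semitopological semigroup such that for some $\alpha\in\lambda$ the map $s\mapsto(\alpha,s,\alpha)$ ($0_T\mapsto0$) is a homeomorphism $T\to T_{\alpha,\alpha}$. The orthogonal sum of semigroups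 $T_\iota$ with zeros is $\{0\}\cup\bigcup_\iota(T_\iota\setminus\{0_\iota\})$ with products computed in $T_\iota$ when both factors lie in the same $T_\iota$ and the product is non-zero, and $0$ otherwise. *)

theory Defs
  imports "HOL-Analysis.Analysis"
begin

definition regular_open_in :: "'a topology \<Rightarrow> 'a set \<Rightarrow> bool" where
  "regular_open_in X A \<longleftrightarrow> X interior_of (X closure_of A) = A"

definition semiregular_space :: "'a topology \<Rightarrow> bool" where
  "semiregular_space X \<longleftrightarrow>
     (\<forall>U x. openin X U \<and> x \<in> U \<longrightarrow>
        (\<exists>V. regular_open_in X V \<and> x \<in> V \<and> V \<subseteq> U))"

definition pseudocompact_space :: "'a topology \<Rightarrow> bool" where
  "pseudocompact_space X \<longleftrightarrow>
     (\<forall>\<U>. (\<forall>U\<in>\<U>. openin X U \<and> U \<noteq> {}) \<and> locally_finite_in X \<U> \<longrightarrow> finite \<U>)"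

definition semitop_semigroup :: "'a topology \<Rightarrow> ('a \<Rightarrow> 'a \<Rightarrow> 'a) \<Rightarrow> bool" where
  "semitop_semigroup X m \<longleftrightarrow>
     Hausdorff_space X \<and>
     (\<forall>x\<in>topspace X. \<forall>y\<in>topspace X. m x y \<in> topspace X) \<and>
     (\<forall>x\<in>topspace X. \<forall>y\<in>topspace X. \<forall>z\<in>topspace X. m (m x y) z = m x (m y z)) \<and>
     (\<forall>a\<in>topspace X. continuous_map X X (\<lambda>x. m a x) \<and> continuous_map X X (\<lambda>x. m x a))"

definition semitop_monoid_with_zero ::
    "'a topology \<Rightarrow> ('a \<Rightarrow> 'a \<Rightarrow> 'a) \<Rightarrow> 'a \<Rightarrow> 'a \<Rightarrow> bool" where
  "semitop_monoid_with_zero X m z e \<longleftrightarrow>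
     semitop_semigroup X m \<and> z \<in> topspace X \<and> e \<in> topspace X \<and>
     (\<forall>x\<in>topspace X. m z x = z \<and> m x z = z) \<and>
     (\<forall>x\<in>topspace X. m e x = x \<and> m x e = x)"

text \<open>Elements of \<open>\<Sum>_{i\<in>I} B^0_{\<lambda>_i}(S_i)\<close>: \<open>None\<close> is the zero \<open>0\<close>,
  \<open>Some (i, \<alpha>, s, \<beta>)\<close> is the triple \<open>(\<alpha>, s, \<beta>)\<close> of the \<open>i\<close>-th summand.
  The cardinal \<open>\<lambda>_i\<close> is represented by a set \<open>\<Lambda> i\<close> of that cardinality;
  \<open>T i\<close> is the carrier of \<open>S_i\<close>, \<open>m i\<close> its multiplication, \<open>z i\<close> its zero.\<close>

definition osum_carrier ::
    "'i set \<Rightarrow> ('i \<Rightarrow> 'c set) \<Rightarrow> ('i \<Rightarrow> 'a set) \<Rightarrow> ('i \<Rightarrow> 'a)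
     \<Rightarrow> ('i \<times> 'c \<times> 'a \<times> 'c) option set" where
  "osum_carrier I \<Lambda> T z =
     insert None {Some (i, \<alpha>, s, \<beta>) | i \<alpha> s \<beta>.
        i \<in> I \<and> \<alpha> \<in> \<Lambda> i \<and> \<beta> \<in> \<Lambda> i \<and> s \<in> T i \<and> s \<noteq> z i}"

fun osum_mult ::
    "('i \<Rightarrow> 'a \<Rightarrow> 'a \<Rightarrow> 'a) \<Rightarrow> ('i \<Rightarrow> 'a)
     \<Rightarrow> ('i \<times> 'c \<times> 'a \<times> 'c) option \<Rightarrow> ('i \<times> 'c \<times> 'a \<times> 'c) option
     \<Rightarrow> ('i \<times> 'c \<times> 'a \<times> 'c) option" where
  "osum_mult m z (Some (i, \<alpha>, a, \<beta>)) (Some (j, \<gamma>, b, \<delta>)) =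
     (if i = j \<and> \<beta> = \<gamma> \<and> m i a b \<noteq> z i then Some (i, \<alpha>, m i a b, \<delta>) else None)"
| "osum_mult m z _ _ = None"

text \<open>The set \<open>(S_i)_{\<alpha>,\<beta>}\<close> (note \<open>0_{S_i} \<in> S_i\<close>, so it contains \<open>0\<close>).\<close>
definition block ::
    "('i \<Rightarrow> 'a set) \<Rightarrow> ('i \<Rightarrow> 'a) \<Rightarrow> 'i \<Rightarrow> 'c \<Rightarrow> 'c
     \<Rightarrow> ('i \<times> 'c \<times> 'a \<times> 'c) option set" where
  "block T z i \<alpha> \<beta> = insert None {Some (i, \<alpha>, s, \<beta>) | s. s \<in> T i \<and> s \<noteq> z i}"

definition diag_emb ::
    "('i \<Rightarrow> 'a) \<Rightarrow> 'i \<Rightarrow> 'c \<Rightarrow> 'a \<Rightarrow> ('i \<times> 'c \<times> 'a \<times> 'c) option" where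
  "diag_emb z i \<alpha> s = (if s = z i then None else Some (i, \<alpha>, s, \<alpha>))"

end

theory Submission
  imports Defs
begin

theorem proposition2p8:
  fixes I :: "'i set"
    and \<Lambda> :: "'i \<Rightarrow> 'c set"
    and \<sigma> :: "'i \<Rightarrow> 'a topology"
    and m :: "'i \<Rightarrow> 'a \<Rightarrow> 'a \<Rightarrow> 'a"
    and z e :: "'i \<Rightarrow> 'a"
    and \<tau> :: "('i \<times> 'c \<times> 'a \<times> 'c) option topology"
  assumes monoids: "\<And>i. i \<in> I \<Longrightarrow> semitop_monoid_with_zero (\<sigma> i) (m i) (z i) (e i)"
    and carrier: "topspace \<tau> = osum_carrier I \<Lambda> (\<lambda>i. topspace (\<sigma> i)) z"
    and semitop: "semitop_semigroup \<tau> (osum_mult m z)"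
    and semireg: "semiregular_space \<tau>"
    and pseudo: "pseudocompact_space \<tau>"
    and brandt: "\<And>i. i \<in> I \<Longrightarrow> \<exists>\<alpha>\<in>\<Lambda> i.
                   homeomorphic_map (\<sigma> i)
                     (subtopology \<tau> (block (\<lambda>i. topspace (\<sigma> i)) z i \<alpha> \<alpha>))
                     (diag_emb z i \<alpha>)"
    and U: "openin \<tau> U" "None \<in> U"
  shows "finite {(i, \<alpha>, \<beta>). i \<in> I \<and> \<alpha> \<in> \<Lambda> i \<and> \<beta> \<in> \<Lambda> i \<and>
                   \<not> block (\<lambda>i. topspace (\<sigma> i)) z i \<alpha> \<beta> \<subseteq> U}"
proof -
  let ?T = "\<lambda>i. topspace (\<sigma> i)"
  let ?mult = "osum_mult m z"
  define Ob :: "'i \<times> 'c \<times> 'c \<Rightarrow> ('i \<times> 'c \<times> 'a \<times> 'c) option set" where "Ob = (\<lambda>(i,\<alpha>,\<beta>). {Some (i,\<alpha>,s,\<beta>) | s. s \<in> ?T i \<and> s \<noteq> z i})"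
  define Bad where "Bad = {(i, \<alpha>, \<beta>). i \<in> I \<and> \<alpha> \<in> \<Lambda> i \<and> \<beta> \<in> \<Lambda> i \<and>
                   \<not> block (\<lambda>i. topspace (\<sigma> i)) z i \<alpha> \<beta> \<subseteq> U}"
  have haus: "Hausdorff_space \<tau>" using semitop by (simp add: semitop_semigroup_def)
  have cont: "\<And>a. a \<in> topspace \<tau> \<Longrightarrow> continuous_map \<tau> \<tau> (\<lambda>x. ?mult a x) \<and> continuous_map \<tau> \<tau> (\<lambda>x. ?mult x a)"
    using semitop by (simp add: semitop_semigroup_def)
  have Nonetop: "None \<in> topspace \<tau>" using carrier by (simp add: osum_carrier_def)
  have opnN: "openin \<tau> (topspace \<tau> - {None})"
    using haus Nonetop by (simp add: Hausdorff_imp_t1_space closedin_t1_singleton openin_diff)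
  have Obtop: "Ob (i,\<alpha>,\<beta>) \<subseteq> topspace \<tau>" if "i \<in> I" "\<alpha> \<in> \<Lambda> i" "\<beta> \<in> \<Lambda> i" for i \<alpha> \<beta>
    using that carrier by (auto simp: Ob_def osum_carrier_def)
  have Obopen: "openin \<tau> (Ob (i,\<alpha>,\<beta>))" if i: "i \<in> I" "\<alpha> \<in> \<Lambda> i" "\<beta> \<in> \<Lambda> i" and ez: "e i \<noteq> z i" for i \<alpha> \<beta>
  proof -
    have mon: "semitop_monoid_with_zero (\<sigma> i) (m i) (z i) (e i)" using monoids i by blast
    hence eT: "e i \<in> ?T i" and eid: "\<And>s. s \<in> ?T i \<Longrightarrow> m i (e i) s = s \<and> m i s (e i) = s"
      by (auto simp: semitop_monoid_with_zero_def)
    define a where "a = Some (i,\<alpha>,e i,\<alpha>)"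
    define b where "b = Some (i,\<beta>,e i,\<beta>)"
    have a: "a \<in> topspace \<tau>" and b: "b \<in> topspace \<tau>"
      using i eT ez carrier by (auto simp: a_def b_def osum_carrier_def)
    have c: "continuous_map \<tau> \<tau> (\<lambda>x. ?mult a (?mult x b))"
      using cont[OF a] cont[OF b] continuous_map_compose[of \<tau> \<tau> "\<lambda>x. ?mult x b" \<tau> "\<lambda>x. ?mult a x"]
      by (simp add: o_def)
    have eq: "Ob (i,\<alpha>,\<beta>) = {x \<in> topspace \<tau>. ?mult a (?mult x b) \<in> topspace \<tau> - {None}}"
    proof (intro equalityI subsetI)
      fix x assume x: "x \<in> Ob (i,\<alpha>,\<beta>)"
      then obtain s where s: "x = Some (i,\<alpha>,s,\<beta>)" "s \<in> ?T i" "s \<noteq> z i" by (auto simp: Ob_def)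
      have "?mult a (?mult x b) = x" using s eid[OF s(2)] by (simp add: a_def b_def)
      then show "x \<in> {x \<in> topspace \<tau>. ?mult a (?mult x b) \<in> topspace \<tau> - {None}}"
        using x Obtop[OF i] s by auto
    next
      fix x assume x: "x \<in> {x \<in> topspace \<tau>. ?mult a (?mult x b) \<in> topspace \<tau> - {None}}"
      hence xt: "x \<in> topspace \<tau>" and ne: "?mult a (?mult x b) \<noteq> None" by auto
      show "x \<in> Ob (i,\<alpha>,\<beta>)"
      proof (cases x)
        case None then show ?thesis using ne by simp
      next
        case (Some y)
        then obtain j \<gamma> s \<delta> where y: "x = Some (j,\<gamma>,s,\<delta>)" by (cases y) auto
        with xt carrier have s: "s \<in> ?T j" "s \<noteq> z j" by (auto simp: osum_carrier_def)
        show ?thesis using ne s eid y by (auto simp: a_def b_def Ob_def split: if_splits)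
      qed
    qed
    show ?thesis unfolding eq using openin_continuous_map_preimage[OF c opnN] .
  qed
  obtain V where V: "regular_open_in \<tau> V" "None \<in> V" "V \<subseteq> U"
    using semireg U unfolding semiregular_space_def by blast
  have Vtop: "V \<subseteq> topspace \<tau>" using U(1) V(3) openin_subset by blast
  define F where "F = (\<lambda>t. Ob t - \<tau> closure_of V)"
  have Vint: "\<tau> interior_of (\<tau> closure_of V) = V" using V(1) by (simp add: regular_open_in_def)
  have badE: "e i \<noteq> z i" if "(i,\<alpha>,\<beta>) \<in> Bad" for i \<alpha> \<beta>
  proof
    assume ez: "e i = z i"
    from that have i: "i \<in> I" by (auto simp: Bad_def)
    have mon: "semitop_monoid_with_zero (\<sigma> i) (m i) (z i) (e i)" using monoids i by blast
    hence "\<And>s. s \<in> ?T i \<Longrightarrow> s = z i" using ez unfolding semitop_monoid_with_zero_def by metis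
    hence "block ?T z i \<alpha> \<beta> = {None}" by (auto simp: block_def)
    with that U(2) show False by (auto simp: Bad_def)
  qed
  have Fprops: "openin \<tau> (F t) \<and> F t \<noteq> {}" if t: "t \<in> Bad" for t
  proof -
    obtain i \<alpha> \<beta> where tt: "t = (i,\<alpha>,\<beta>)" by (cases t) auto
    have i: "i \<in> I" "\<alpha> \<in> \<Lambda> i" "\<beta> \<in> \<Lambda> i" and nb: "\<not> block ?T z i \<alpha> \<beta> \<subseteq> U"
      using t tt by (auto simp: Bad_def)
    have op: "openin \<tau> (Ob t)" using Obopen[OF i badE] t tt by simp
    have "openin \<tau> (F t)" unfolding F_def using op by (simp add: openin_diff)
    moreover have "F t \<noteq> {}"
    proof
      assume "F t = {}"
      hence "Ob t \<subseteq> \<tau> closure_of V" by (auto simp: F_def)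
      hence "Ob t \<subseteq> \<tau> interior_of (\<tau> closure_of V)" using op by (simp add: interior_of_maximal)
      hence "Ob t \<subseteq> U" using Vint V(3) by simp
      moreover have "block ?T z i \<alpha> \<beta> = insert None (Ob t)" by (auto simp: block_def Ob_def tt)
      ultimately show False using nb U(2) by auto
    qed
    ultimately show ?thesis by blast
  qed
  have Obdisj: "Ob t \<inter> Ob t' = {}" if "t \<noteq> t'" for t t'
    using that by (cases t; cases t') (auto simp: Ob_def)
  have inj: "inj_on F Bad"
  proof (rule inj_onI)
    fix t t' assume "t \<in> Bad" "t' \<in> Bad" "F t = F t'"
    then show "t = t'" using Fprops[of t] Obdisj[of t t'] by (auto simp: F_def)
  qed
  have lf: "locally_finite_in \<tau> (F ` Bad)"
    unfolding locally_finite_in_def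
  proof (intro conjI ballI)
    show "\<Union> (F ` Bad) \<subseteq> topspace \<tau>" using Fprops openin_subset by blast
  next
    fix x assume x: "x \<in> topspace \<tau>"
    show "\<exists>W. openin \<tau> W \<and> x \<in> W \<and> finite {A \<in> F ` Bad. A \<inter> W \<noteq> {}}"
    proof (cases x)
      case None
      have "{A \<in> F ` Bad. A \<inter> V \<noteq> {}} = {}"
        using closure_of_subset[OF Vtop] by (auto simp: F_def)
      moreover have "openin \<tau> V" using Vint openin_interior_of[of \<tau> "\<tau> closure_of V"] by simp
      ultimately show ?thesis using None V(2) by (intro exI[of _ V]) (simp only: finite.emptyI)
    next
      case (Some y)
      then obtain i \<alpha> s \<beta> where y: "x = Some (i,\<alpha>,s,\<beta>)" by (cases y) auto
      with x carrier have i: "i \<in> I" "\<alpha> \<in> \<Lambda> i" "\<beta> \<in> \<Lambda> i" and s: "s \<in> ?T i" "s \<noteq> z i"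
        by (auto simp: osum_carrier_def)
      have ez: "e i \<noteq> z i"
      proof
        assume ez: "e i = z i"
        have mon: "semitop_monoid_with_zero (\<sigma> i) (m i) (z i) (e i)" using monoids i by blast
        hence "s = z i" using ez s unfolding semitop_monoid_with_zero_def by metis
        with s show False by simp
      qed
      have xO: "x \<in> Ob (i,\<alpha>,\<beta>)" using y s by (auto simp: Ob_def)
      have "{A \<in> F ` Bad. A \<inter> Ob (i,\<alpha>,\<beta>) \<noteq> {}} \<subseteq> {F (i,\<alpha>,\<beta>)}"
      proof
        fix A assume "A \<in> {A \<in> F ` Bad. A \<inter> Ob (i,\<alpha>,\<beta>) \<noteq> {}}"
        then obtain t where "t \<in> Bad" "A = F t" "F t \<inter> Ob (i,\<alpha>,\<beta>) \<noteq> {}" by auto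
        then show "A \<in> {F (i,\<alpha>,\<beta>)}" using Obdisj[of t "(i,\<alpha>,\<beta>)"] by (auto simp: F_def)
      qed
      then show ?thesis using Obopen[OF i ez] xO by (meson finite.emptyI finite_insert finite_subset)
    qed
  qed
  have "finite (F ` Bad)" using pseudo lf Fprops unfolding pseudocompact_space_def by blast
  then have "finite Bad" using inj finite_image_iff by blast
  then show ?thesis unfolding Bad_def .
qed

end
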